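(* Fix $M<\infty$ and $\kappa\in(0,1/2)$, and assume unconfoundedness. Let $\mathcal{G}$ be a class of treatment allocations and let $\mathcal{G}_1,\mathcal{G}_2,\dots$ be a (finite or countable) sequence of classes with $\mathcal{G}_k\subseteq\mathcal{G}$ of finite VC dimension $V_k$. Suppose the penalties $C_n(k)$ satisfy the following tail condition: there exist positive constants $c_0,c_1$ such that for every $n$, every $k$ and every $\epsilon>0$, $$\sup_{P\in\mathcal{P}(M,\kappa)}P^n\big(W_n(\hat G_{n,k})-W(\hat G_{n,k})-C_n(k)>\epsilon\big)\le c_1e^{-2c_0n\epsilon^2}.$$ Then there exist positive constants $\Delta$ and $c_0$ such that for every $n$ and every $P\in\mathcal{P}(M,\kappa)$, the PWM rule $\hat G_n$ satisfies $$E_{P^n}\big[W^*_{\mathcal{G}}-W(\hat G_n)\big]\le\inf_k\Big[E_{P^n}[C_n(k)]+\big(W^*_{\mathcal{G}}-W^*_{\mathcal{G}_k}\big)+\sqrt{\tfrac{k}{n}}\Big]+\sqrt{\frac{\log(\Delta e)}{2c_0n}}.$$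
   Context: Potential outcomes $Y(0),Y(1)\in\mathbb{R}$, treatment $D\in\{0,1\}$, covariates $X\in\mathcal{X}\subseteq\mathbb{R}^{d_x}$; observed outcome $Y=Y(1)D+Y(0)(1-D)$; $P$ is the distribution of $(Y,D,X)$ and the data $S_n=\{(Y_i,D_i,X_i)\}_{i=1}^n$ are i.i.d. from $P$. Unconfoundedness: $(Y(1),Y(0))\perp D\mid X$. Propensity score $e(x)=E_P[D\mid X=x]$ (known to the planner). $\mathcal{P}(M,\kappa)$ is the set of distributions for which the support of $Y$ is contained in $[-M/2,M/2]$ and $e(x)\in[\kappa,1-\kappa]$ for all $x$. A treatment allocation is a measurable set $G\subseteq\mathcal{X}$ with welfare $W(G)=E_P\big[\big(\frac{YD}{e(X)}-\frac{Y(1-D)}{1-e(X)}\big)\mathbf{1}\{X\in G\}\big]$; for a class $\mathcal{A}$ of allocations, $W^*_{\mathcal{A}}=\sup_{G\in\mathcal{A}}W(G)$. Let $\tau_i=\frac{Y_iD_i}{e(X_i)}-\frac{Y_i(1-D_i)}{1-e(X_i)}$ and $W_n(G)=\frac1n\sum_{i=1}^n\tau_i\mathbf{1}\{X_i\in G\}$. For each $k$, $\hat G_{n,k}\in\arg\max_{G\in\mathcal{G}_k}W_n(G)$. For each $k$, $C_n(k)$ is a (data-dependent) penalty; define $R_{n,k}(G)=W_n(G)-C_n(k)-\sqrt{k/n}$ and the penalized welfare maximization (PWM) rule $\hat G_n=\hat G_{n,\hat k}$ with $\hat k\in\arg\max_kR_{n,k}(\hat G_{n,k})$. Maximizers are assumed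 to exist and measurability issues are ignored. *)

theory Defs
  imports "HOL-Probability.Probability"
begin

type_synonym 'd obs = "real \<times> bool \<times> (real ^ 'd)"

definition obs_space :: "'d::finite obs measure" where
  "obs_space = borel \<Otimes>\<^sub>M count_space UNIV \<Otimes>\<^sub>M borel"

definition obsY :: "'d::finite obs \<Rightarrow> real" where "obsY w = fst w"
definition obsD :: "'d::finite obs \<Rightarrow> bool" where "obsD w = fst (snd w)"
definition obsX :: "'d::finite obs \<Rightarrow> real ^ 'd" where "obsX w = snd (snd w)"

definition sample_space :: "nat \<Rightarrow> (nat \<Rightarrow> 'd::finite obs) measure" where
  "sample_space n = PiM {..<n} (\<lambda>_. obs_space)"

definition sample_law :: "'d::finite obs measure \<Rightarrow> nat \<Rightarrow> (nat \<Rightarrow> 'd obs) measure" where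
  "sample_law P n = PiM {..<n} (\<lambda>_. P)"

text \<open>e is (a version of) the propensity score E_P[D | X = x]: a measurable function of x
  with E_P[D 1{X \<in> A}] = E_P[e(X) 1{X \<in> A}] for every Borel set A.\<close>

definition propensity :: "'d::finite obs measure \<Rightarrow> (real ^ 'd \<Rightarrow> real) \<Rightarrow> bool" where
  "propensity P e \<longleftrightarrow> e \<in> borel_measurable borel \<and>
     (\<forall>A \<in> sets borel.
        (\<integral>w. of_bool (obsD w) * indicator A (obsX w) \<partial>P)
      = (\<integral>w. e (obsX w) * indicator A (obsX w) \<partial>P))"

text \<open>(P, e) with P in the class P(M, kappa) and e its propensity score (the version known
  to the planner, with kappa \<le> e(x) \<le> 1 - kappa for all x).\<close>

definition in_PMk :: "real \<Rightarrow> real \<Rightarrow> 'd::finite obs measure \<Rightarrow> (real ^ 'd \<Rightarrow> real) \<Rightarrow> bool" where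
  "in_PMk M \<kappa> P e \<longleftrightarrow> prob_space P \<and> sets P = sets obs_space \<and>
     (AE w in P. obsY w \<in> {-M/2 .. M/2}) \<and>
     propensity P e \<and> (\<forall>x. \<kappa> \<le> e x \<and> e x \<le> 1 - \<kappa>)"

definition tau :: "(real ^ 'd \<Rightarrow> real) \<Rightarrow> 'd::finite obs \<Rightarrow> real" where
  "tau e w = obsY w * of_bool (obsD w) / e (obsX w)
           - obsY w * (1 - of_bool (obsD w)) / (1 - e (obsX w))"

definition welfare :: "'d::finite obs measure \<Rightarrow> (real ^ 'd \<Rightarrow> real) \<Rightarrow> (real ^ 'd) set \<Rightarrow> real" where
  "welfare P e G = (\<integral>w. tau e w * indicator G (obsX w) \<partial>P)"

definition Wstar :: "'d::finite obs measure \<Rightarrow> (real ^ 'd \<Rightarrow> real) \<Rightarrow> (real ^ 'd) set set \<Rightarrow> real" where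
  "Wstar P e \<A> = (SUP G \<in> \<A>. welfare P e G)"

definition emp_welfare :: "(real ^ 'd \<Rightarrow> real) \<Rightarrow> nat \<Rightarrow> (nat \<Rightarrow> 'd::finite obs) \<Rightarrow> (real ^ 'd) set \<Rightarrow> real" where
  "emp_welfare e n S G = (1 / real n) * (\<Sum>i<n. tau e (S i) * indicator G (obsX (S i)))"

definition shatters :: "'a set set \<Rightarrow> 'a set \<Rightarrow> bool" where
  "shatters \<A> F \<longleftrightarrow> (\<lambda>A. A \<inter> F) ` \<A> = Pow F"

definition vc_dim :: "'a set set \<Rightarrow> enat" where
  "vc_dim \<A> = Sup {enat (card F) | F. finite F \<and> shatters \<A> F}"

end

theory Submission
  imports Defs
begin


lemma meas_obsX[measurable]: "obsX \<in> measurable obs_space borel"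
  unfolding obsX_def[abs_def] obs_space_def by measurable
lemma meas_obsY[measurable]: "obsY \<in> borel_measurable obs_space"
  unfolding obsY_def[abs_def] obs_space_def by measurable
lemma meas_obsD[measurable]: "obsD \<in> measurable obs_space (count_space UNIV)"
  unfolding obsD_def[abs_def] obs_space_def by measurable
lemma meas_tau[measurable]:
  assumes [measurable]: "e \<in> borel_measurable borel"
  shows "tau e \<in> borel_measurable obs_space"
  unfolding tau_def[abs_def] by measurable

lemma tau_bound:
  assumes "\<kappa> \<le> e (obsX w)" "e (obsX w) \<le> 1 - \<kappa>" "0 < \<kappa>" "\<bar>obsY w\<bar> \<le> M/2"
  shows "\<bar>tau e w\<bar> \<le> M / \<kappa>"
proof -
  have M: "0 \<le> M" using assms(4) by auto
  have "\<bar>obsY w\<bar> / e (obsX w) \<le> (M/2)/\<kappa>"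
    using assms by (intro frac_le) auto
  moreover have "\<bar>obsY w\<bar> / (1 - e (obsX w)) \<le> (M/2)/\<kappa>"
    using assms by (intro frac_le) auto
  moreover have "(M/2)/\<kappa> \<le> M/\<kappa>" using M assms(3) by (simp, intro frac_le) auto
  ultimately show ?thesis using assms
    by (cases "obsD w") (auto simp: tau_def abs_divide)
qed



lemma PMk_facts:
  fixes P :: "'d::finite obs measure"
  assumes "in_PMk M \<kappa> P e"
  shows "prob_space P" "sets P = sets obs_space" "e \<in> borel_measurable borel"
    "\<forall>x. \<kappa> \<le> e x \<and> e x \<le> 1 - \<kappa>" "AE w in P. \<bar>obsY w\<bar> \<le> M/2"
  using assms unfolding in_PMk_def propensity_def
  by (auto elim!: AE_mp)

lemma meas_P: "sets P = sets obs_space \<Longrightarrow> measurable P N = measurable obs_space N"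
  by (rule measurable_cong_sets) auto

lemma welfare_facts:
  fixes P :: "'d::finite obs measure" and G :: "(real ^ 'd) set"
  assumes PM: "in_PMk M \<kappa> P e" and k: "0 < \<kappa>" and G: "G \<in> sets borel"
  shows "integrable P (\<lambda>w. tau e w * indicator G (obsX w))"
    "\<bar>welfare P e G\<bar> \<le> M/\<kappa>"
proof -
  note F = PMk_facts[OF PM]
  interpret prob_space P by (rule F(1))
  have [measurable]: "e \<in> borel_measurable borel" by (rule F(3))
  have m: "(\<lambda>w. tau e w * indicator G (obsX w)) \<in> borel_measurable P"
    unfolding meas_P[OF F(2)] using G by measurable
  have ae: "AE w in P. \<bar>tau e w * indicator G (obsX w)\<bar> \<le> M/\<kappa>"
    using F(5)
  proof (rule AE_mp, intro AE_I2 impI)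
    fix w :: "'d obs" assume "\<bar>obsY w\<bar> \<le> M/2"
    then have h: "\<bar>tau e w\<bar> \<le> M/\<kappa>" using F(4) k by (intro tau_bound) auto
    have "0 \<le> M/\<kappa>" using h by linarith
    with h show "\<bar>tau e w * indicator G (obsX w)\<bar> \<le> M/\<kappa>"
      by (auto simp: indicator_def)
  qed
  show int: "integrable P (\<lambda>w. tau e w * indicator G (obsX w))"
    using ae m by (intro integrable_const_bound[where B="M/\<kappa>"]) auto
  have "welfare P e G \<le> M/\<kappa>" unfolding welfare_def
    using ae by (intro integral_le_const int) (auto elim!: AE_mp)
  moreover have "- (M/\<kappa>) \<le> welfare P e G" unfolding welfare_def
    using ae by (intro integral_ge_const int) (auto elim!: AE_mp)
  ultimately show "\<bar>welfare P e G\<bar> \<le> M/\<kappa>" by auto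
qed

lemma law_facts:
  assumes "prob_space P"
  shows "prob_space (sample_law P n)"
  unfolding sample_law_def using assms by (intro prob_space_PiM) auto

lemma law_sets:
  assumes "sets P = sets obs_space"
  shows "sets (sample_law P n) = sets (sample_space n)"
  unfolding sample_law_def sample_space_def using assms by (intro sets_PiM_cong) auto

lemma law_component:
  assumes P: "prob_space P" and i: "i < n" and f[measurable]: "f \<in> borel_measurable P"
    and int: "integrable P f"
  shows "integrable (sample_law P n) (\<lambda>S. f (S i) :: real)"
    "(\<integral>S. f (S i) \<partial>sample_law P n) = (\<integral>w. f w \<partial>P)"
proof -
  have D: "distr (sample_law P n) P (\<lambda>\<omega>. \<omega> i) = P"
    unfolding sample_law_def using P i by (intro distr_PiM_component) auto
  have g: "(\<lambda>\<omega>. \<omega> i) \<in> measurable (sample_law P n) P"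
    unfolding sample_law_def using i by (intro measurable_component_singleton) auto
  show "integrable (sample_law P n) (\<lambda>S. f (S i))"
    using integrable_distr_eq[OF g f] int D by simp
  show "(\<integral>S. f (S i) \<partial>sample_law P n) = (\<integral>w. f w \<partial>P)"
    using integral_distr[OF g f] D by simp
qed



lemma meas_comp_sample[measurable]:
  "i < n \<Longrightarrow> (\<lambda>S. S i) \<in> measurable (sample_space n) obs_space"
  unfolding sample_space_def by (intro measurable_component_singleton) auto

lemma of_bool_meas: "(of_bool :: bool \<Rightarrow> real) \<in> measurable (count_space UNIV) borel"
  by simp

lemma meas_emp:
  fixes g :: "(nat \<Rightarrow> 'd::finite obs) \<Rightarrow> (real ^ 'd) set"
  assumes [measurable]: "e \<in> borel_measurable borel"
    and h: "(\<lambda>(S, x). x \<in> g S) \<in> measurable (sample_space n \<Otimes>\<^sub>M borel) (count_space UNIV)"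
  shows "(\<lambda>S. emp_welfare e n S (g S)) \<in> borel_measurable (sample_space n)"
proof -
  have t: "(\<lambda>S. tau e (S i) * indicator (g S) (obsX (S i))) \<in> borel_measurable (sample_space n)"
    if i: "i < n" for i
  proof -
    have p: "(\<lambda>S. (S, obsX (S i))) \<in> measurable (sample_space n) (sample_space n \<Otimes>\<^sub>M borel)"
      using i by measurable
    have "(\<lambda>S. of_bool ((\<lambda>(S, x). x \<in> g S) (S, obsX (S i))) :: real) \<in> borel_measurable (sample_space n)"
      by (rule measurable_compose[OF measurable_compose[OF p h] of_bool_meas])
    then have "(\<lambda>S. indicator (g S) (obsX (S i)) :: real) \<in> borel_measurable (sample_space n)"
      by (simp add: indicator_def of_bool_def)
    moreover have "(\<lambda>S. tau e (S i)) \<in> borel_measurable (sample_space n)" using i by measurable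
    ultimately show ?thesis by (intro borel_measurable_times) auto
  qed
  have "(\<lambda>S. \<Sum>i<n. tau e (S i) * indicator (g S) (obsX (S i))) \<in> borel_measurable (sample_space n)"
    by (rule borel_measurable_sum) (use t in auto)
  then show ?thesis unfolding emp_welfare_def
    by (rule borel_measurable_times[OF borel_measurable_const])
qed

lemma meas_welf:
  fixes g :: "(nat \<Rightarrow> 'd::finite obs) \<Rightarrow> (real ^ 'd) set" and P :: "'d obs measure"
  assumes [measurable]: "e \<in> borel_measurable borel"
    and h: "(\<lambda>(S, x). x \<in> g S) \<in> measurable (sample_space n \<Otimes>\<^sub>M borel) (count_space UNIV)"
    and P: "prob_space P" "sets P = sets obs_space"
  shows "(\<lambda>S. welfare P e (g S)) \<in> borel_measurable (sample_space n)"
proof -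
  interpret prob_space P by (rule P(1))
  have sp: "sets (sample_space n \<Otimes>\<^sub>M P) = sets (sample_space n \<Otimes>\<^sub>M obs_space)"
    using P(2) by (intro sets_pair_measure_cong) auto
  have p: "(\<lambda>Sw. (fst Sw, obsX (snd Sw))) \<in> measurable (sample_space n \<Otimes>\<^sub>M obs_space) (sample_space n \<Otimes>\<^sub>M borel)"
    by measurable
  have "(\<lambda>Sw. of_bool ((\<lambda>(S, x). x \<in> g S) (fst Sw, obsX (snd Sw))) :: real)
      \<in> borel_measurable (sample_space n \<Otimes>\<^sub>M obs_space)"
    by (rule measurable_compose[OF measurable_compose[OF p h] of_bool_meas])
  then have i: "(\<lambda>Sw. indicator (g (fst Sw)) (obsX (snd Sw)) :: real) \<in> borel_measurable (sample_space n \<Otimes>\<^sub>M obs_space)"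
    by (simp add: indicator_def of_bool_def)
  have "(\<lambda>Sw. tau e (snd Sw)) \<in> borel_measurable (sample_space n \<Otimes>\<^sub>M obs_space)" by measurable
  with i have "(\<lambda>Sw. tau e (snd Sw) * indicator (g (fst Sw)) (obsX (snd Sw))) \<in> borel_measurable (sample_space n \<Otimes>\<^sub>M obs_space)"
    by (intro borel_measurable_times)
  then have "case_prod (\<lambda>S w. tau e w * indicator (g S) (obsX w)) \<in> borel_measurable (sample_space n \<Otimes>\<^sub>M P)"
    unfolding measurable_cong_sets[OF sp refl] by (simp add: case_prod_beta')
  then show ?thesis unfolding welfare_def
    by (rule borel_measurable_lebesgue_integral)
qed



lemma emp_integral:
  fixes P :: "'d::finite obs measure" and G :: "(real ^ 'd) set"
  assumes PM: "in_PMk M \<kappa> P e" and k: "0 < \<kappa>" and G: "G \<in> sets borel" and n: "1 \<le> n"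
  shows "integrable (sample_law P n) (\<lambda>S. emp_welfare e n S G)"
    "(\<integral>S. emp_welfare e n S G \<partial>sample_law P n) = welfare P e G"
proof -
  note F = PMk_facts[OF PM]
  have [measurable]: "e \<in> borel_measurable borel" by (rule F(3))
  define f where "f = (\<lambda>w. tau e w * indicator G (obsX w) :: real)"
  have fm: "f \<in> borel_measurable P"
    unfolding meas_P[OF F(2)] f_def using G by measurable
  have fi: "integrable P f" unfolding f_def by (rule welfare_facts(1)[OF PM k G])
  note c = law_component[OF F(1) _ fm fi]
  have eq: "emp_welfare e n S G = (1 / real n) * (\<Sum>i<n. f (S i))" for S
    unfolding emp_welfare_def f_def ..
  show "integrable (sample_law P n) (\<lambda>S. emp_welfare e n S G)"
    unfolding eq by (intro integrable_mult_right integrable_sum) (use c(1) in auto)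
  have "(\<integral>S. emp_welfare e n S G \<partial>sample_law P n) = (1 / real n) * (\<Sum>i<n. (\<integral>S. f (S i) \<partial>sample_law P n))"
    unfolding eq using c(1) by (simp add: Bochner_Integration.integral_sum)
  also have "\<dots> = (1 / real n) * (\<Sum>i<n. welfare P e G)"
    using c(2) by (simp add: welfare_def f_def)
  also have "\<dots> = welfare P e G" using n by simp
  finally show "(\<integral>S. emp_welfare e n S G \<partial>sample_law P n) = welfare P e G" .
qed

lemma count_bound:
  fixes \<delta> y :: real
  assumes d: "0 < \<delta>"
  shows "ennreal (max 0 y) \<le> (\<Sum>m. ennreal (\<delta> * of_bool (real m * \<delta> < y)))"
proof -
  define N where "N = nat \<lceil>y / \<delta>\<rceil>"
  have "(\<Sum>m<N. ennreal (\<delta> * of_bool (real m * \<delta> < y))) = (\<Sum>m<N. ennreal \<delta>)"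
  proof (intro sum.cong refl)
    fix m assume "m \<in> {..<N}"
    then have "int m < \<lceil>y / \<delta>\<rceil>" unfolding N_def by auto
    then have "real m < y / \<delta>" by (simp add: less_ceiling_iff)
    then have "real m * \<delta> < y" using d by (simp add: field_simps)
    then show "ennreal (\<delta> * of_bool (real m * \<delta> < y)) = ennreal \<delta>" by simp
  qed
  also have "\<dots> = ennreal (real N * \<delta>)" using d by (simp add: ennreal_of_nat_eq_real_of_nat ennreal_mult')
  finally have 1: "(\<Sum>m<N. ennreal (\<delta> * of_bool (real m * \<delta> < y))) = ennreal (real N * \<delta>)" .
  have "max 0 y \<le> real N * \<delta>"
  proof -
    have "y / \<delta> \<le> real N" unfolding N_def by linarith
    then have "y \<le> real N * \<delta>" using d by (simp add: field_simps)
    moreover have "0 \<le> real N * \<delta>" using d by simp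
    ultimately show ?thesis by simp
  qed
  then have "ennreal (max 0 y) \<le> ennreal (real N * \<delta>)" by (rule ennreal_leI)
  also have "\<dots> \<le> (\<Sum>m. ennreal (\<delta> * of_bool (real m * \<delta> < y)))"
    unfolding 1[symmetric] by (intro sum_le_suminf) auto
  finally show ?thesis .
qed

lemma int_le_nn:
  fixes u h :: "'a \<Rightarrow> real"
  assumes u: "integrable M u" and le: "\<And>x. x \<in> space M \<Longrightarrow> u x \<le> h x"
    and h0: "\<And>x. 0 \<le> h x"
    and nn: "(\<integral>\<^sup>+x. ennreal (h x) \<partial>M) \<le> ennreal K" and K: "0 \<le> K"
  shows "(\<integral>x. u x \<partial>M) \<le> K"
proof -
  have ui: "integrable M (\<lambda>x. max 0 (u x))" using u by auto
  have "(\<integral>x. u x \<partial>M) \<le> (\<integral>x. max 0 (u x) \<partial>M)"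
    by (intro integral_mono u ui) auto
  moreover have "ennreal (\<integral>x. max 0 (u x) \<partial>M) = (\<integral>\<^sup>+x. ennreal (max 0 (u x)) \<partial>M)"
    by (rule nn_integral_eq_integral[symmetric]) (use ui in auto)
  moreover have "(\<integral>\<^sup>+x. ennreal (max 0 (u x)) \<partial>M) \<le> (\<integral>\<^sup>+x. ennreal (h x) \<partial>M)"
    by (intro nn_integral_mono ennreal_leI) (use le h0 in auto)
  ultimately show ?thesis using nn K
    by (metis ennreal_le_iff order_trans)
qed

lemma geom_ennreal:
  fixes q a :: real
  assumes "0 \<le> q" "q < 1" "0 \<le> a"
  shows "(\<Sum>m. ennreal (a * q ^ m)) = ennreal (a / (1 - q))"
proof -
  have s: "summable (\<lambda>m. a * q ^ m)" using assms by (intro summable_mult summable_geometric) auto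
  have "(\<Sum>m. ennreal (a * q ^ m)) = ennreal (\<Sum>m. a * q ^ m)"
    using assms s by (intro suminf_ennreal2) auto
  also have "(\<Sum>m. a * q ^ m) = a / (1 - q)"
    using assms by (simp add: suminf_mult suminf_geometric divide_simps)
  finally show ?thesis .
qed


theorem theorem3p1:
  fixes M \<kappa> :: real
    and Kmax :: enat
    and \<G> :: "(real ^ 'd::finite) set set"
    and Gk :: "nat \<Rightarrow> (real ^ 'd) set set"
    and C :: "(real ^ 'd \<Rightarrow> real) \<Rightarrow> nat \<Rightarrow> nat \<Rightarrow> (nat \<Rightarrow> 'd obs) \<Rightarrow> real"
    and ghat :: "(real ^ 'd \<Rightarrow> real) \<Rightarrow> nat \<Rightarrow> nat \<Rightarrow> (nat \<Rightarrow> 'd obs) \<Rightarrow> (real ^ 'd) set"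
    and khat :: "(real ^ 'd \<Rightarrow> real) \<Rightarrow> nat \<Rightarrow> (nat \<Rightarrow> 'd obs) \<Rightarrow> nat"
  defines "I \<equiv> {k::nat. 1 \<le> k \<and> enat k \<le> Kmax}"
  assumes M_pos: "0 < M"
    and kappa: "0 < \<kappa>" "\<kappa> < 1/2"
    and Kmax: "1 \<le> Kmax"
    and G_meas: "\<G> \<subseteq> sets borel"
    and Gk_sub: "\<And>k. k \<in> I \<Longrightarrow> Gk k \<subseteq> \<G>"
    and Gk_VC: "\<And>k. k \<in> I \<Longrightarrow> vc_dim (Gk k) < \<infinity>"
    and ghat_max: "\<And>e n k S. e \<in> borel_measurable borel \<Longrightarrow> (\<forall>x. \<kappa> \<le> e x \<and> e x \<le> 1 - \<kappa>) \<Longrightarrow> k \<in> I \<Longrightarrow>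
        ghat e n k S \<in> Gk k \<and>
        (\<forall>G \<in> Gk k. emp_welfare e n S G \<le> emp_welfare e n S (ghat e n k S))"
    and khat_max: "\<And>e n S. e \<in> borel_measurable borel \<Longrightarrow> (\<forall>x. \<kappa> \<le> e x \<and> e x \<le> 1 - \<kappa>) \<Longrightarrow>
        khat e n S \<in> I \<and>
        (\<forall>k \<in> I. emp_welfare e n S (ghat e n k S) - C e n k S - sqrt (real k / real n)
              \<le> emp_welfare e n S (ghat e n (khat e n S) S) - C e n (khat e n S) S
                 - sqrt (real (khat e n S) / real n))"
    and meas_C: "\<And>e n k. e \<in> borel_measurable borel \<Longrightarrow> (\<forall>x. \<kappa> \<le> e x \<and> e x \<le> 1 - \<kappa>) \<Longrightarrow>
        k \<in> I \<Longrightarrow> C e n k \<in> borel_measurable (sample_space n)"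
    and meas_ghat: "\<And>e n k. e \<in> borel_measurable borel \<Longrightarrow> (\<forall>x. \<kappa> \<le> e x \<and> e x \<le> 1 - \<kappa>) \<Longrightarrow>
        k \<in> I \<Longrightarrow> (\<lambda>(S, x). x \<in> ghat e n k S)
          \<in> measurable (sample_space n \<Otimes>\<^sub>M borel) (count_space UNIV)"
    and meas_khat: "\<And>e n. e \<in> borel_measurable borel \<Longrightarrow> (\<forall>x. \<kappa> \<le> e x \<and> e x \<le> 1 - \<kappa>) \<Longrightarrow>
        khat e n \<in> measurable (sample_space n) (count_space UNIV)"
    and tail: "\<exists>c0 c1. 0 < c0 \<and> 0 < c1 \<and>
        (\<forall>n \<ge> 1. \<forall>k \<in> I. \<forall>\<epsilon> > 0. \<forall>P e. in_PMk M \<kappa> P e \<longrightarrow>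
           measure (sample_law P n)
             {S \<in> space (sample_law P n).
                emp_welfare e n S (ghat e n k S) - welfare P e (ghat e n k S) - C e n k S > \<epsilon>}
           \<le> c1 * exp (- 2 * c0 * real n * \<epsilon>\<^sup>2))"
  shows "\<exists>\<Delta> c0. 0 < \<Delta> \<and> 0 < c0 \<and>
     (\<forall>n \<ge> 1. \<forall>P e. in_PMk M \<kappa> P e \<longrightarrow>
        (\<forall>k \<in> I. integrable (sample_law P n) (C e n k) \<longrightarrow>
           (\<integral>S. Wstar P e \<G> - welfare P e (ghat e n (khat e n S) S) \<partial>sample_law P n)
           \<le> (\<integral>S. C e n k S \<partial>sample_law P n) + (Wstar P e \<G> - Wstar P e (Gk k))
              + sqrt (real k / real n)
              + sqrt (ln (\<Delta> * exp 1) / (2 * c0 * real n))))"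
proof -
  obtain c0 c1 where c0: "0 < c0" and c1: "0 < c1" and tl: "\<forall>n \<ge> 1. \<forall>k \<in> I. \<forall>\<epsilon> > 0. \<forall>P e. in_PMk M \<kappa> P e \<longrightarrow>
           measure (sample_law P n)
             {S \<in> space (sample_law P n).
                emp_welfare e n S (ghat e n k S) - welfare P e (ghat e n k S) - C e n k S > \<epsilon>}
           \<le> c1 * exp (- 2 * c0 * real n * \<epsilon>\<^sup>2)"
    using tail by blast
  define q where "q = exp (- 2 * c0)"
  have q0: "0 < q" unfolding q_def by simp
  have q1: "q < 1" unfolding q_def using c0 by simp
  define K where "K = c1 / (1 - q) / (1 - q)"
  have K0: "0 < K" unfolding K_def using c1 q1 by simp
  define c0' where "c0' = 1 / (2 * K^2)"
  have c0'0: "0 < c0'" unfolding c0'_def using K0 by simp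
  have Kn: "sqrt (ln (1 * exp 1) / (2 * c0' * real n)) = K / sqrt (real n)" if "1 \<le> n" for n :: nat
  proof -
    have a: "(K / sqrt (real n))^2 = K^2 / real n" by (simp add: power_divide)
    have "ln (1 * exp 1) / (2 * c0' * real n) = K^2 / real n"
      unfolding c0'_def using K0 by simp
    then have "ln (1 * exp 1) / (2 * c0' * real n) = (K / sqrt (real n))^2" using a by simp
    then show ?thesis using K0 by simp
  qed
  show ?thesis
  proof (rule exI[of _ 1], rule exI[of _ c0'], intro conjI allI impI ballI)
    show "(0::real) < 1" by simp
    show "0 < c0'" by (rule c0'0)
    fix n :: nat and P :: "'d obs measure" and e k
    assume n: "1 \<le> n" and PM: "in_PMk M \<kappa> P e" and k: "k \<in> I"
      and Ci: "integrable (sample_law P n) (C e n k)"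
    note F = PMk_facts[OF PM]
    have em[measurable]: "e \<in> borel_measurable borel" by (rule F(3))
    note eb = F(4)
    define L where "L = sample_law P n"
    interpret L: prob_space L unfolding L_def by (rule law_facts[OF F(1)])
    have sL: "sets L = sets (sample_space n)" unfolding L_def by (rule law_sets[OF F(2)])
    have mL: "\<And>N. measurable L N = measurable (sample_space n) N"
      by (rule measurable_cong_sets) (simp_all add: sL)
    have ghat: "\<And>j S. j \<in> I \<Longrightarrow> ghat e n j S \<in> Gk j \<and>
        (\<forall>G \<in> Gk j. emp_welfare e n S G \<le> emp_welfare e n S (ghat e n j S))"
      using ghat_max em eb by blast
    have Gm: "\<And>j S. j \<in> I \<Longrightarrow> ghat e n j S \<in> sets borel"
      using ghat Gk_sub G_meas by blast
    have kh: "\<And>S. khat e n S \<in> I \<and>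
        (\<forall>k \<in> I. emp_welfare e n S (ghat e n k S) - C e n k S - sqrt (real k / real n)
              \<le> emp_welfare e n S (ghat e n (khat e n S) S) - C e n (khat e n S) S
                 - sqrt (real (khat e n S) / real n))"
      using khat_max em eb by blast
    define Wn where "Wn j S = emp_welfare e n S (ghat e n j S)" for j S
    define Wp where "Wp j S = welfare P e (ghat e n j S)" for j S
    define Y where "Y j S = (if j \<in> I then Wn j S - Wp j S - C e n j S - sqrt (real j / real n) else 0)" for j S
    have mWn: "Wn j \<in> borel_measurable L" if "j \<in> I" for j
      unfolding mL Wn_def[abs_def] by (rule meas_emp[OF em meas_ghat[OF em eb that]])
    have mWp: "Wp j \<in> borel_measurable L" if "j \<in> I" for j
      unfolding mL Wp_def[abs_def] by (rule meas_welf[OF em meas_ghat[OF em eb that] F(1) F(2)])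
    have mC: "C e n j \<in> borel_measurable L" if "j \<in> I" for j
      unfolding mL by (rule meas_C[OF em eb that])
    have mY[measurable]: "Y j \<in> borel_measurable L" for j
    proof (cases "j \<in> I")
      case True
      note [measurable] = mWn[OF True] mWp[OF True] mC[OF True]
      show ?thesis unfolding Y_def[abs_def] using True by simp
    next
      case False
      then show ?thesis unfolding Y_def[abs_def] by simp
    qed
    define B where "B = M / \<kappa>"
    have Wpb: "\<bar>Wp j S\<bar> \<le> B" if "j \<in> I" for j S
      unfolding Wp_def B_def by (rule welfare_facts(2)[OF PM kappa(1) Gm[OF that]])
    define T where "T S = Y (khat e n S) S" for S
    define f where "f S = Wstar P e \<G> - Wp (khat e n S) S" for S
    have mkh: "khat e n \<in> measurable L (count_space UNIV)"
      unfolding mL by (rule meas_khat[OF em eb])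
    have mf: "f \<in> borel_measurable L"
    proof -
      define Wp' where "Wp' j S = (if j \<in> I then Wp j S else 0)" for j S
      have m': "Wp' j \<in> borel_measurable L" for j
      proof (cases "j \<in> I")
        case True
        have "Wp' j = Wp j" using True unfolding Wp'_def[abs_def] by simp
        then show ?thesis using mWp[OF True] by simp
      next
        case False
        have "Wp' j = (\<lambda>S. 0)" using False unfolding Wp'_def[abs_def] by simp
        then show ?thesis by simp
      qed
      have "(\<lambda>S. Wp' (khat e n S) S) \<in> borel_measurable L"
        by (rule measurable_compose_countable'[OF m' mkh]) simp
      moreover have "(\<lambda>S. Wp' (khat e n S) S) = (\<lambda>S. Wp (khat e n S) S)"
        using kh by (auto simp: Wp'_def)
      ultimately have "(\<lambda>S. Wp (khat e n S) S) \<in> borel_measurable L" by simp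
      then show ?thesis unfolding f_def[abs_def] by (intro borel_measurable_diff borel_measurable_const)
    qed
    have fi: "integrable L f"
    proof (rule L.integrable_const_bound[where B="\<bar>Wstar P e \<G>\<bar> + B"])
      show "AE S in L. norm (f S) \<le> \<bar>Wstar P e \<G>\<bar> + B"
      proof (rule AE_I2)
        fix S
        have a: "\<bar>Wp (khat e n S) S\<bar> \<le> B" using Wpb kh by blast
        have "\<bar>Wstar P e \<G> - Wp (khat e n S) S\<bar> \<le> \<bar>Wstar P e \<G>\<bar> + \<bar>Wp (khat e n S) S\<bar>"
          by (rule abs_triangle_ineq4)
        then show "norm (f S) \<le> \<bar>Wstar P e \<G>\<bar> + B" unfolding f_def real_norm_def using a by linarith
      qed
    qed (rule mf)
    have nnT: "(\<integral>\<^sup>+S. ennreal (max 0 (T S)) \<partial>L) \<le> ennreal (K / sqrt (real n))"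
    proof -
      define \<delta> where "\<delta> = 1 / sqrt (real n)"
      have d0: "0 < \<delta>" using n by (simp add: \<delta>_def)
      define A where "A j m = {S \<in> space L. real m * \<delta> < Y j S}" for j m :: nat
      have Am: "A j m \<in> sets L" for j m unfolding A_def by measurable
      have trm: "(\<integral>\<^sup>+S. ennreal (\<delta> * of_bool (real m * \<delta> < Y j S)) \<partial>L) \<le> ennreal (\<delta> * c1 * q^j * q^m)" for j m
      proof -
        have mb: "measure L (A j m) \<le> c1 * q^j * q^m"
        proof (cases "j \<in> I")
          case False
          have "0 \<le> real m * \<delta>" using d0 by simp
          then have "A j m = {}" unfolding A_def Y_def using False by auto
          then show ?thesis using c1 q0 by simp
        next
          case True
          define \<epsilon> where "\<epsilon> = real m * \<delta> + sqrt (real j / real n)"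
          have j1: "1 \<le> j" using True unfolding I_def by simp
          have s1: "0 < sqrt (real j / real n)" using j1 n by simp
          have s2: "0 \<le> real m * \<delta>" using d0 by simp
          have \<epsilon>0: "0 < \<epsilon>" unfolding \<epsilon>_def using s1 s2 by linarith
          have "A j m = {S \<in> space (sample_law P n). emp_welfare e n S (ghat e n j S) - welfare P e (ghat e n j S) - C e n j S > \<epsilon>}"
            unfolding A_def Y_def Wn_def Wp_def \<epsilon>_def L_def using True by auto
          then have "measure L (A j m) \<le> c1 * exp (- 2 * c0 * real n * \<epsilon>\<^sup>2)"
            using tl[rule_format, OF n True \<epsilon>0 PM] unfolding L_def by simp
          also have "\<dots> \<le> c1 * q^j * q^m"
          proof -
            have sn: "sqrt (real n) > 0" using n by simp
            have "\<epsilon> = (real m + sqrt (real j)) / sqrt (real n)"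
              unfolding \<epsilon>_def \<delta>_def by (simp add: real_sqrt_divide add_divide_distrib)
            then have "real n * \<epsilon>\<^sup>2 = (real m + sqrt (real j))\<^sup>2"
              using sn by (simp add: power_divide)
            also have "\<dots> = real m * real m + 2 * real m * sqrt (real j) + real j"
              by (simp add: power2_eq_square algebra_simps)
            finally have e1: "real n * \<epsilon>\<^sup>2 = real m * real m + 2 * real m * sqrt (real j) + real j" .
            have "real m \<le> real m * real m" by (cases m) auto
            moreover have "0 \<le> 2 * real m * sqrt (real j)" by simp
            ultimately have "real j + real m \<le> real n * \<epsilon>\<^sup>2" using e1 by linarith
            then have "- 2 * c0 * real n * \<epsilon>\<^sup>2 \<le> - 2 * c0 * (real j + real m)"
              using c0 by (simp add: mult_left_mono)
            then have "exp (- 2 * c0 * real n * \<epsilon>\<^sup>2) \<le> exp (- 2 * c0 * (real j + real m))" by simp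
            also have "\<dots> = q^j * q^m"
              unfolding q_def by (simp add: exp_of_nat_mult[symmetric] exp_add[symmetric] algebra_simps)
            finally show ?thesis using c1 by (simp add: mult.assoc)
          qed
          finally show ?thesis .
        qed
        have "(\<integral>\<^sup>+S. ennreal (\<delta> * of_bool (real m * \<delta> < Y j S)) \<partial>L) = (\<integral>\<^sup>+S. ennreal \<delta> * indicator (A j m) S \<partial>L)"
          by (intro nn_integral_cong) (auto simp: A_def indicator_def)
        also have "\<dots> = ennreal \<delta> * emeasure L (A j m)" by (rule nn_integral_cmult_indicator[OF Am])
        also have "\<dots> = ennreal (\<delta> * measure L (A j m))"
          using d0 by (simp add: L.emeasure_eq_measure ennreal_mult)
        also have "\<dots> \<le> ennreal (\<delta> * c1 * q^j * q^m)"
          using mb d0 by (intro ennreal_leI) (simp add: mult.assoc mult_left_mono)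
        finally show ?thesis .
      qed
      have "(\<integral>\<^sup>+S. ennreal (max 0 (T S)) \<partial>L)
          \<le> (\<integral>\<^sup>+S. (\<Sum>j. (\<Sum>m. ennreal (\<delta> * of_bool (real m * \<delta> < Y j S)))) \<partial>L)"
      proof (rule nn_integral_mono)
        fix S
        have "ennreal (max 0 (T S)) \<le> (\<Sum>m. ennreal (\<delta> * of_bool (real m * \<delta> < Y (khat e n S) S)))"
          unfolding T_def by (rule count_bound[OF d0])
        also have "\<dots> \<le> (\<Sum>j. (\<Sum>m. ennreal (\<delta> * of_bool (real m * \<delta> < Y j S))))"
          using sum_le_suminf[of "\<lambda>j. (\<Sum>m. ennreal (\<delta> * of_bool (real m * \<delta> < Y j S)))" "{khat e n S}"]
          by (simp add: summableI)
        finally show "ennreal (max 0 (T S)) \<le> (\<Sum>j. (\<Sum>m. ennreal (\<delta> * of_bool (real m * \<delta> < Y j S))))" .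
      qed
      also have "\<dots> = (\<Sum>j. (\<integral>\<^sup>+S. (\<Sum>m. ennreal (\<delta> * of_bool (real m * \<delta> < Y j S))) \<partial>L))"
        by (rule nn_integral_suminf) measurable
      also have "\<dots> = (\<Sum>j. (\<Sum>m. (\<integral>\<^sup>+S. ennreal (\<delta> * of_bool (real m * \<delta> < Y j S)) \<partial>L)))"
        by (intro suminf_cong nn_integral_suminf) measurable
      also have "\<dots> \<le> (\<Sum>j. (\<Sum>m. ennreal (\<delta> * c1 * q^j * q^m)))"
        by (intro suminf_le summableI trm)
      also have "\<dots> = (\<Sum>j. ennreal ((\<delta> * c1 / (1 - q)) * q^j))"
      proof (rule suminf_cong)
        fix j
        have "(\<Sum>m. ennreal (\<delta> * c1 * q^j * q^m)) = ennreal (\<delta> * c1 * q^j / (1 - q))"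
          using q0 q1 d0 c1 by (intro geom_ennreal) auto
        then show "(\<Sum>m. ennreal (\<delta> * c1 * q^j * q^m)) = ennreal ((\<delta> * c1 / (1 - q)) * q^j)"
          by simp
      qed
      also have "\<dots> = ennreal ((\<delta> * c1 / (1 - q)) / (1 - q))"
        using q0 q1 d0 c1 by (intro geom_ennreal) auto
      also have "(\<delta> * c1 / (1 - q)) / (1 - q) = K / sqrt (real n)"
        unfolding K_def \<delta>_def by simp
      finally show ?thesis .
    qed
    have key: "welfare P e G \<le> (\<integral>S. C e n k S \<partial>L) + sqrt (real k / real n) + K / sqrt (real n)
        + Wstar P e \<G> - (\<integral>S. f S \<partial>L)" if G: "G \<in> Gk k" for G
    proof -
      have Gb: "G \<in> sets borel" using G Gk_sub[OF k] G_meas by blast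
      note E = emp_integral[OF PM kappa(1) Gb n]
      define g where "g S = Wstar P e \<G> - emp_welfare e n S G + C e n k S + sqrt (real k / real n)" for S
      have E1: "integrable L (\<lambda>S. emp_welfare e n S G)" using E(1) unfolding L_def .
      have E2: "(\<integral>S. emp_welfare e n S G \<partial>L) = welfare P e G" using E(2) unfolding L_def .
      have Ci': "integrable L (\<lambda>S. C e n k S)" using Ci unfolding L_def .
      have i1: "integrable L (\<lambda>S. Wstar P e \<G> - emp_welfare e n S G)"
        by (rule Bochner_Integration.integrable_diff[OF L.integrable_const E1])
      have i2: "integrable L (\<lambda>S. Wstar P e \<G> - emp_welfare e n S G + C e n k S)"
        by (rule Bochner_Integration.integrable_add[OF i1 Ci'])
      have gi: "integrable L g" unfolding g_def[abs_def]
        by (rule Bochner_Integration.integrable_add[OF i2 L.integrable_const])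
      have gint: "(\<integral>S. g S \<partial>L) = Wstar P e \<G> - welfare P e G + (\<integral>S. C e n k S \<partial>L) + sqrt (real k / real n)"
      proof -
        have "(\<integral>S. g S \<partial>L) = (\<integral>S. Wstar P e \<G> - emp_welfare e n S G + C e n k S \<partial>L) + sqrt (real k / real n)"
          unfolding g_def[abs_def] by (subst Bochner_Integration.integral_add[OF i2 L.integrable_const]) (simp add: L.prob_space)
        also have "(\<integral>S. Wstar P e \<G> - emp_welfare e n S G + C e n k S \<partial>L)
            = (\<integral>S. Wstar P e \<G> - emp_welfare e n S G \<partial>L) + (\<integral>S. C e n k S \<partial>L)"
          by (rule Bochner_Integration.integral_add[OF i1 Ci'])
        also have "(\<integral>S. Wstar P e \<G> - emp_welfare e n S G \<partial>L) = Wstar P e \<G> - welfare P e G"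
          by (subst Bochner_Integration.integral_diff[OF L.integrable_const E1]) (simp add: L.prob_space E2)
        finally show ?thesis .
      qed
      have pw: "f S - g S \<le> max 0 (T S)" for S
      proof -
        have 1: "emp_welfare e n S G \<le> Wn k S" using ghat[OF k] G unfolding Wn_def by blast
        have 2: "Wn k S - C e n k S - sqrt (real k / real n) \<le> Wn (khat e n S) S - C e n (khat e n S) S
                 - sqrt (real (khat e n S) / real n)" using kh k unfolding Wn_def by blast
        have 3: "T S = Wn (khat e n S) S - Wp (khat e n S) S - C e n (khat e n S) S
                 - sqrt (real (khat e n S) / real n)" unfolding T_def Y_def using kh by simp
        show ?thesis unfolding f_def g_def 3 using 1 2 by linarith
      qed
      have "(\<integral>S. f S - g S \<partial>L) \<le> K / sqrt (real n)"
        by (rule int_le_nn[OF _ _ _ nnT]) (use fi gi pw K0 in auto)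
      then show ?thesis using fi gi gint by (simp add: Bochner_Integration.integral_diff)
    qed
    have ne: "Gk k \<noteq> {}" using ghat[OF k] by blast
    have "Wstar P e (Gk k) \<le> (\<integral>S. C e n k S \<partial>L) + sqrt (real k / real n) + K / sqrt (real n)
        + Wstar P e \<G> - (\<integral>S. f S \<partial>L)"
      unfolding Wstar_def[of P e "Gk k"] by (rule cSUP_least[OF ne key])
    moreover have "(\<integral>S. f S \<partial>L) = (\<integral>S. Wstar P e \<G> - welfare P e (ghat e n (khat e n S) S) \<partial>sample_law P n)"
      unfolding f_def Wp_def L_def ..
    ultimately show "(\<integral>S. Wstar P e \<G> - welfare P e (ghat e n (khat e n S) S) \<partial>sample_law P n)
           \<le> (\<integral>S. C e n k S \<partial>sample_law P n) + (Wstar P e \<G> - Wstar P e (Gk k))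
              + sqrt (real k / real n)
              + sqrt (ln (1 * exp 1) / (2 * c0' * real n))"
      unfolding Kn[OF n] L_def by linarith
  qed
qed

end
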